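(* Let $n,m$ be positive integers and $\mathbf a,\mathbf b\in\{0,1\}^n$. If the $(\mathbf a,\mathbf b)$-entry of $(A_n)^m$ is positive, then so is the $(\mathbf a,\mathbf b)$-entry of $(A_n)^{m+1}$. Furthermore, the $(\mathbf a,\mathbf b)$-entry of $(A_n)^m$ is positive if and only if $\mathbf a\trianglerighteq_z\mathbf b$ for some $z\le m$.
   Context: Dominance: $\mathbf v\trianglerighteq\mathbf w$ iff $\sum_{k\le i}v_k\ge\sum_{k\le i}w_k$ for all $i$. For $\mathbf v\in\mathbb N^n$, $\chi(\mathbf v)_i=1$ if $v_i>0$ and $0$ otherwise. For $\mathbf v,\mathbf w\in\mathbb N^n$ with $\mathbf v\trianglerighteq\mathbf w$ and $\chi(\mathbf v)\trianglerighteq\chi(\mathbf w)$, let $Z_{\mathbf v}=\{i:v_i=0\}$, $Z_{\mathbf w}=\{i:w_i=0\}$, and construct the matching $M\subseteq Z_{\mathbf v}\times Z_{\mathbf w}$ by repeatedly taking the largest unmatched index $i'\in Z_{\mathbf v}$ and matching it to the largest unmatched index in $Z_{\mathbf w}$ that is $\le i'$, until all of $Z_{\mathbf v}$ is matched. With $z=\max\{\max\{i-j:(i,j)\in M\},1\}$ one says $\mathbf v$ $z$-dominates $\mathbf w$, written $\mathbf v\trianglerighteq_z\mathbf w$ (this notation always presupposes $\mathbf v\trianglerighteq\mathbf w$ and $\chi(\mathbf v)\trianglerighteq\chi(\mathbf w)$). $A_n$ is the $2^n\times2^n$ matrix with rows and columns indexed by $\{0,1\}^n$, with $(A_n)_{\mathbf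 u,\mathbf v}=1$ if $\mathbf u\trianglerighteq_1\mathbf v$ and $0$ otherwise. *)

theory Defs
  imports Main
begin

text \<open>Vectors in N^n are lists of naturals of length n; position k of the list
  (0-based) is coordinate k+1 of the paper. Only differences of indices matter.\<close>

definition dominates :: "nat list \<Rightarrow> nat list \<Rightarrow> bool" where
  "dominates v w \<longleftrightarrow> length v = length w \<and>
     (\<forall>i\<le>length v. sum_list (take i v) \<ge> sum_list (take i w))"

definition chi :: "nat list \<Rightarrow> nat list" where
  "chi v = map (\<lambda>x. if x > 0 then 1 else 0) v"

definition zeros_desc :: "nat list \<Rightarrow> nat list" where
  "zeros_desc v = filter (\<lambda>i. v ! i = 0) (rev [0..<length v])"

fun greedy_match :: "nat list \<Rightarrow> nat list \<Rightarrow> (nat \<times> nat) list" where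
  "greedy_match [] W = []"
| "greedy_match (i # is) W =
     (let js = filter (\<lambda>j. j \<le> i) W in
      if js = [] then []
      else let j = Max (set js) in (i, j) # greedy_match is (remove1 j W))"

definition matching :: "nat list \<Rightarrow> nat list \<Rightarrow> (nat \<times> nat) list" where
  "matching v w = greedy_match (zeros_desc v) (zeros_desc w)"

definition zval :: "nat list \<Rightarrow> nat list \<Rightarrow> nat" where
  "zval v w = max (Max (insert 0 ((\<lambda>(i, j). i - j) ` set (matching v w)))) 1"

definition zdom :: "nat \<Rightarrow> nat list \<Rightarrow> nat list \<Rightarrow> bool" where
  "zdom z v w \<longleftrightarrow> dominates v w \<and> dominates (chi v) (chi w) \<and> z = zval v w"

definition bin :: "nat \<Rightarrow> nat list set" where
  "bin n = {xs. length xs = n \<and> set xs \<subseteq> {0, 1}}"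

definition A_entry :: "nat list \<Rightarrow> nat list \<Rightarrow> nat" where
  "A_entry u v = (if zdom 1 u v then 1 else 0)"

fun Apow :: "nat \<Rightarrow> nat \<Rightarrow> nat list \<Rightarrow> nat list \<Rightarrow> nat" where
  "Apow n 0 u v = (if u = v then 1 else 0)"
| "Apow n (Suc m) u v = (\<Sum>w\<in>bin n. Apow n m u w * A_entry w v)"

end

theory Submission
  imports Defs
begin

definition gmax :: "nat \<Rightarrow> nat list \<Rightarrow> nat" where
  "gmax i W = Max (set (filter (\<lambda>j. j \<le> i) W))"

definition gok :: "nat \<Rightarrow> nat list \<Rightarrow> bool" where
  "gok i W \<longleftrightarrow> (\<exists>x\<in>set W. x \<le> i)"

lemma gm_nil: "\<not> gok i W \<Longrightarrow> greedy_match (i#I) W = []"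
  unfolding gok_def by (simp add: filter_empty_conv)

lemma gm_cons: "gok i W \<Longrightarrow> greedy_match (i#I) W = (i, gmax i W) # greedy_match I (remove1 (gmax i W) W)"
proof -
  assume "gok i W"
  then have "filter (\<lambda>j. j \<le> i) W \<noteq> []" unfolding gok_def by (simp add: filter_empty_conv)
  then show ?thesis by (simp only: greedy_match.simps Let_def gmax_def if_False)
qed

lemma gmax_props: assumes "gok i W"
  shows "gmax i W \<in> set W" "gmax i W \<le> i" "\<And>x. x \<in> set W \<Longrightarrow> x \<le> i \<Longrightarrow> x \<le> gmax i W"
proof -
  have ne: "set (filter (\<lambda>j. j \<le> i) W) \<noteq> {}" using assms unfolding gok_def by auto
  have "gmax i W \<in> set (filter (\<lambda>j. j \<le> i) W)" unfolding gmax_def using ne by (rule Max_in[OF finite_set])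
  then show "gmax i W \<in> set W" "gmax i W \<le> i" by auto
  fix x assume "x \<in> set W" "x \<le> i"
  then have "x \<in> set (filter (\<lambda>j. j \<le> i) W)" by simp
  then show "x \<le> gmax i W" unfolding gmax_def by (rule Max_ge[OF finite_set])
qed

definition Zs :: "nat list \<Rightarrow> nat set" where "Zs a = {i. i < length a \<and> a!i = 0}"

lemma set_zeros_desc: "set (zeros_desc a) = Zs a" by (auto simp: zeros_desc_def Zs_def)
lemma distinct_zeros_desc: "distinct (zeros_desc a)" by (simp add: zeros_desc_def)
lemma sorted_zeros_desc: "sorted_wrt (>) (zeros_desc a)"
  unfolding zeros_desc_def by (simp add: sorted_wrt_filter sorted_wrt_rev)

lemma g_sound: "(i,j) \<in> set (greedy_match I W) \<Longrightarrow> i \<in> set I \<and> j \<in> set W \<and> j \<le> i"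
proof (induction I arbitrary: W)
  case Nil then show ?case by simp
next
  case (Cons i0 rest)
  show ?case
  proof (cases "gok i0 W")
    case False then show ?thesis using Cons.prems gm_nil by simp
  next
    case True
    note P = gmax_props[OF True]
    from Cons.prems consider "(i,j) = (i0, gmax i0 W)"
      | "(i,j) \<in> set (greedy_match rest (remove1 (gmax i0 W) W))"
      unfolding gm_cons[OF True] by (metis set_ConsD)
    then show ?thesis
    proof cases
      case 1 then show ?thesis using P by simp
    next
      case 2
      have "i \<in> set rest \<and> j \<in> set (remove1 (gmax i0 W) W) \<and> j \<le> i"
        using Cons.IH[OF 2] .
      then show ?thesis using set_remove1_subset[of "gmax i0 W" W] by auto
    qed
  qed
qed

lemma g_fst: "length (greedy_match I W) = length I \<Longrightarrow> map fst (greedy_match I W) = I"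
proof (induction I arbitrary: W)
  case Nil then show ?case by simp
next
  case (Cons i0 rest)
  show ?case
  proof (cases "gok i0 W")
    case False then show ?thesis using Cons.prems gm_nil by simp
  next
    case True
    then show ?thesis using Cons unfolding gm_cons[OF True] by simp
  qed
qed

lemma g_dist: "distinct W \<Longrightarrow> distinct (map snd (greedy_match I W))"
proof (induction I arbitrary: W)
  case Nil then show ?case by simp
next
  case (Cons i0 rest)
  show ?case
  proof (cases "gok i0 W")
    case False then show ?thesis using gm_nil by simp
  next
    case True
    define j where "j = gmax i0 W"
    have d: "distinct (remove1 j W)" using Cons.prems by simp
    have "j \<notin> snd ` set (greedy_match rest (remove1 j W))"
    proof
      assume "j \<in> snd ` set (greedy_match rest (remove1 j W))"
      then obtain i where "(i, j) \<in> set (greedy_match rest (remove1 j W))" by force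
      then have "j \<in> set (remove1 j W)" using g_sound by blast
      then show False using Cons.prems by simp
    qed
    then show ?thesis using Cons.IH[OF d] unfolding gm_cons[OF True] j_def by simp
  qed
qed

lemma g_mono: "distinct W \<Longrightarrow> sorted_wrt (>) I \<Longrightarrow>
  \<forall>(i,j)\<in>set (greedy_match I W). \<forall>(i',j')\<in>set (greedy_match I W). i < i' \<longrightarrow> j < j'"
proof (induction I arbitrary: W)
  case Nil then show ?case by simp
next
  case (Cons i0 rest)
  show ?case
  proof (cases "gok i0 W")
    case False then show ?thesis using gm_nil by simp
  next
    case True
    define j where "j = gmax i0 W"
    note P = gmax_props[OF True, folded j_def]
    define G where "G = greedy_match rest (remove1 j W)"
    have d: "distinct (remove1 j W)" using Cons.prems by simp
    have IH: "\<forall>(i,j)\<in>set G. \<forall>(i',j')\<in>set G. i < i' \<longrightarrow> j < j'"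
      using Cons.IH[OF d] Cons.prems(2) unfolding G_def by simp
    have tl: "i < i0 \<and> jj < j" if "(i,jj) \<in> set G" for i jj
    proof -
      from g_sound[OF that[unfolded G_def]] have "i \<in> set rest" "jj \<in> set (remove1 j W)" "jj \<le> i" by auto
      then have "i < i0" "jj \<in> set W" "jj \<noteq> j" using Cons.prems by auto
      then have "jj \<le> j" using \<open>jj \<le> i\<close> P(3) by simp
      with \<open>jj \<noteq> j\<close> \<open>i < i0\<close> show ?thesis by simp
    qed
    have eq: "greedy_match (i0#rest) W = (i0, j) # G" unfolding G_def j_def by (rule gm_cons[OF True])
    have *: "i < i' \<longrightarrow> jj < jj'" if a1: "(i,jj) \<in> set ((i0,j)#G)" and a2: "(i',jj') \<in> set ((i0,j)#G)" for i jj i' jj'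
    proof -
      consider "(i,jj) = (i0,j)" | "(i,jj) \<in> set G" using a1 by (metis set_ConsD)
      then show ?thesis
      proof cases
        case 1
        then show ?thesis using a2 tl[of i' jj'] by auto
      next
        case 2
        show ?thesis using a2 tl[OF 2] IH 2 by auto
      qed
    qed
    show ?thesis unfolding eq using * by blast
  qed
qed

lemma g_opt: "distinct W \<Longrightarrow> sorted_wrt (>) I \<Longrightarrow> inj_on f (set I) \<Longrightarrow>
  \<forall>i\<in>set I. f i \<in> set W \<and> f i \<le> i \<and> i \<le> f i + z \<Longrightarrow>
  length (greedy_match I W) = length I \<and> (\<forall>(i,j)\<in>set (greedy_match I W). i \<le> j + z)"
proof (induction I arbitrary: W f)
  case Nil then show ?case by simp
next
  case (Cons i0 rest)
  have ok: "gok i0 W" using Cons.prems(4) unfolding gok_def by auto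
  define j where "j = gmax i0 W"
  note P = gmax_props[OF ok, folded j_def]
  have fj: "f i0 \<le> j" using P(3) Cons.prems(4) by simp
  define f' where "f' = (\<lambda>x. if f x = j then f i0 else f x)"
  have f'x: "f' x = (if f x = j then f i0 else f x)" for x by (simp add: f'_def)
  have d: "distinct (remove1 j W)" using Cons.prems by simp
  have sr: "set (remove1 j W) = set W - {j}" using Cons.prems(1) by simp
  have ni: "i0 \<notin> set rest" using Cons.prems(2) by auto
  have lt: "x < i0" if "x \<in> set rest" for x using Cons.prems(2) that by simp
  have injf: "inj_on f (insert i0 (set rest))" using Cons.prems(3) by simp
  have injx: "x = y" if "f x = f y" "x \<in> insert i0 (set rest)" "y \<in> insert i0 (set rest)" for x y
    using injf that by (meson inj_onD)
  have inj': "inj_on f' (set rest)"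
  proof (rule inj_onI)
    fix x y assume xy: "x \<in> set rest" "y \<in> set rest" "f' x = f' y"
    show "x = y"
    proof (cases "f x = j"; cases "f y = j")
      assume "f x = j" "f y = j" then have "f x = f y" by simp
      then show ?thesis using injx xy by blast
    next
      assume "f x = j" "f y \<noteq> j"
      then have "f i0 = f y" using xy(3) f'x[of x] f'x[of y] by simp
      then have "i0 = y" using injx xy by blast
      then show ?thesis using ni xy by simp
    next
      assume "f x \<noteq> j" "f y = j"
      then have "f i0 = f x" using xy(3) f'x[of x] f'x[of y] by simp
      then have "i0 = x" using injx xy by blast
      then show ?thesis using ni xy by simp
    next
      assume "f x \<noteq> j" "f y \<noteq> j"
      then have "f x = f y" using xy(3) f'x[of x] f'x[of y] by simp
      then show ?thesis using injx xy by blast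
    qed
  qed
  have prop': "\<forall>i\<in>set rest. f' i \<in> set (remove1 j W) \<and> f' i \<le> i \<and> i \<le> f' i + z"
  proof
    fix x assume x: "x \<in> set rest"
    have xi: "x < i0" using lt x .
    have fx: "f x \<in> set W" "f x \<le> x" "x \<le> f x + z" using Cons.prems(4) x by auto
    have f0: "f i0 \<in> set W" "i0 \<le> f i0 + z" using Cons.prems(4) by auto
    show "f' x \<in> set (remove1 j W) \<and> f' x \<le> x \<and> x \<le> f' x + z"
    proof (cases "f x = j")
      case True
      have "f i0 \<noteq> j"
      proof
        assume "f i0 = j" then have "f i0 = f x" using True by simp
        then have "i0 = x" using injx x by blast
        then show False using ni x by simp
      qed
      moreover have "j \<le> x" using True fx by simp
      moreover have "f i0 \<le> x" using fj \<open>j \<le> x\<close> by (rule order_trans)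
      moreover have "x \<le> f i0 + z" using f0 xi by simp
      moreover have "f i0 \<in> set (remove1 j W)" using sr f0 \<open>f i0 \<noteq> j\<close> by simp
      ultimately show ?thesis using True f'x[of x] by simp
    next
      case False
      then show ?thesis using fx sr f'x[of x] by simp
    qed
  qed
  have srt: "sorted_wrt (>) rest" using Cons.prems(2) by simp
  have IH: "length (greedy_match rest (remove1 j W)) = length rest \<and>
     (\<forall>(i,j)\<in>set (greedy_match rest (remove1 j W)). i \<le> j + z)"
    using Cons.IH[OF d srt inj' prop'] .
  have "i0 \<le> f i0 + z" using Cons.prems(4) by simp
  then have jz: "i0 \<le> j + z" using fj by linarith
  have eq: "greedy_match (i0#rest) W = (i0, j) # greedy_match rest (remove1 j W)"
    unfolding j_def by (rule gm_cons[OF ok])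
  show ?case unfolding eq using IH jz by auto
qed

definition Mz :: "nat list \<Rightarrow> nat list \<Rightarrow> nat \<Rightarrow> bool" where
  "Mz a b z \<longleftrightarrow> (\<exists>f. inj_on f (Zs a) \<and> (\<forall>i\<in>Zs a. f i \<in> Zs b \<and> f i \<le> i \<and> i \<le> f i + z))"

definition Zp :: "nat list \<Rightarrow> nat \<Rightarrow> nat set" where
  "Zp a p = {i. i < p \<and> a!i = 0}"

lemma bin_len: "a \<in> bin n \<Longrightarrow> length a = n" by (simp add: bin_def)

lemma bin_val: "a \<in> bin n \<Longrightarrow> i < n \<Longrightarrow> a!i = 0 \<or> a!i = 1"
  unfolding bin_def using nth_mem by fastforce

lemma Zp_Suc: "Zp a (Suc p) = (if a!p = 0 then insert p (Zp a p) else Zp a p)"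
  unfolding Zp_def by (auto simp: less_Suc_eq)

lemma finite_Zp: "finite (Zp a p)" unfolding Zp_def by simp

lemma p_notin_Zp: "p \<notin> Zp a p" unfolding Zp_def by simp

lemma bin_count: "a \<in> bin n \<Longrightarrow> p \<le> n \<Longrightarrow> sum_list (take p a) + card (Zp a p) = p"
proof (induction p)
  case 0 then show ?case by (simp add: Zp_def)
next
  case (Suc p)
  have pl: "p < length a" using Suc.prems bin_len by fastforce
  have tk: "take (Suc p) a = take p a @ [a!p]" using pl by (rule take_Suc_conv_app_nth)
  have IH: "sum_list (take p a) + card (Zp a p) = p" using Suc by simp
  have v: "a!p = 0 \<or> a!p = 1" using bin_val Suc.prems by simp
  then show ?case
  proof
    assume "a!p = 0"
    then show ?thesis using IH tk Zp_Suc[of a p] finite_Zp[of a p] p_notin_Zp[of p a] by simp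
  next
    assume "a!p = 1"
    then show ?thesis using IH tk Zp_Suc[of a p] by simp
  qed
qed

lemma dom_iff: assumes "a \<in> bin n" "b \<in> bin n"
  shows "dominates a b \<longleftrightarrow> (\<forall>p\<le>n. card (Zp a p) \<le> card (Zp b p))"
proof -
  have "sum_list (take p b) \<le> sum_list (take p a) \<longleftrightarrow> card (Zp a p) \<le> card (Zp b p)" if "p \<le> n" for p
    using bin_count[OF assms(1) that] bin_count[OF assms(2) that] by linarith
  then show ?thesis unfolding dominates_def using bin_len[OF assms(1)] bin_len[OF assms(2)] by auto
qed

lemma Zp_n: "a \<in> bin n \<Longrightarrow> Zp a n = Zs a"
  unfolding Zp_def Zs_def using bin_len by auto

lemma M_dom: assumes "a \<in> bin n" "b \<in> bin n" "Mz a b z" shows "dominates a b"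
proof -
  obtain f where f: "inj_on f (Zs a)" "\<forall>i\<in>Zs a. f i \<in> Zs b \<and> f i \<le> i \<and> i \<le> f i + z"
    using assms(3) unfolding Mz_def by blast
  have "card (Zp a p) \<le> card (Zp b p)" if "p \<le> n" for p
  proof (rule card_inj_on_le)
    have sub: "Zp a p \<subseteq> Zs a" using that bin_len[OF assms(1)] unfolding Zp_def Zs_def by auto
    show "inj_on f (Zp a p)" using f(1) sub by (rule inj_on_subset)
    show "f ` Zp a p \<subseteq> Zp b p"
    proof
      fix y assume "y \<in> f ` Zp a p"
      then obtain i where i: "i \<in> Zp a p" "y = f i" by blast
      then have "i \<in> Zs a" using sub by blast
      then have "f i \<in> Zs b" "f i \<le> i" using f(2) by auto
      then show "y \<in> Zp b p" using i unfolding Zp_def Zs_def by auto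
    qed
    show "finite (Zp b p)" by (rule finite_Zp)
  qed
  then show ?thesis using dom_iff[OF assms(1,2)] by blast
qed

lemma inj_upd_insert: "p \<notin> A \<Longrightarrow> inj_on f A \<Longrightarrow> y \<notin> f ` A \<Longrightarrow> inj_on (f(p := y)) (insert p A)"
  unfolding inj_on_def by (auto split: if_splits)

lemma dom_M_aux: assumes "a \<in> bin n" "b \<in> bin n" "dominates a b"
  shows "p \<le> n \<Longrightarrow> \<exists>f. inj_on f (Zp a p) \<and> (\<forall>i\<in>Zp a p. f i \<in> Zp b p \<and> f i \<le> i)"
proof (induction p)
  case 0 then show ?case by (simp add: Zp_def)
next
  case (Suc p)
  obtain f where f: "inj_on f (Zp a p)" "\<forall>i\<in>Zp a p. f i \<in> Zp b p \<and> f i \<le> i"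
    using Suc.IH Suc.prems by (meson Suc_leD)
  have sub: "Zp b p \<subseteq> Zp b (Suc p)" unfolding Zp_def by auto
  show ?case
  proof (cases "a!p = 0")
    case False
    then have ZA: "Zp a (Suc p) = Zp a p" using Zp_Suc by simp
    have "\<forall>i\<in>Zp a (Suc p). f i \<in> Zp b (Suc p) \<and> f i \<le> i" unfolding ZA using f(2) sub by blast
    then show ?thesis using f(1) ZA by metis
  next
    case a0: True
    have ZA: "Zp a (Suc p) = insert p (Zp a p)" using Zp_Suc a0 by simp
    have pa: "p \<notin> Zp a p" by (rule p_notin_Zp)
    show ?thesis
    proof (cases "b!p = 0")
      case True
      have "p \<notin> f ` Zp a p" using f(2) p_notin_Zp[of p b] by (metis imageE)
      then have inj: "inj_on (f(p := p)) (insert p (Zp a p))" using inj_upd_insert[OF pa f(1)] by blast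
      have pb: "p \<in> Zp b (Suc p)" using True unfolding Zp_def by simp
      have "(f(p:=p)) i \<in> Zp b (Suc p) \<and> (f(p:=p)) i \<le> i" if "i \<in> insert p (Zp a p)" for i
      proof (cases "i = p")
        case True then show ?thesis using pb by simp
      next
        case False
        then have "i \<in> Zp a p" using that by simp
        then have "f i \<in> Zp b (Suc p) \<and> f i \<le> i" using f(2) sub by blast
        then show ?thesis using False by simp
      qed
      then show ?thesis using inj ZA by metis
    next
      case False
      have ZB: "Zp b (Suc p) = Zp b p" using Zp_Suc False by simp
      have "card (Zp a (Suc p)) \<le> card (Zp b (Suc p))" using dom_iff[OF assms(1,2)] assms(3) Suc.prems by blast
      moreover have "card (Zp a (Suc p)) = Suc (card (Zp a p))" unfolding ZA using finite_Zp pa by (rule card_insert_disjoint)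
      ultimately have lt: "card (Zp a p) < card (Zp b p)" using ZB by simp
      have ci: "card (f ` Zp a p) = card (Zp a p)" using f(1) by (rule card_image)
      have "\<not> Zp b p \<subseteq> f ` Zp a p"
      proof
        assume "Zp b p \<subseteq> f ` Zp a p"
        then have "card (Zp b p) \<le> card (f ` Zp a p)" by (rule card_mono[OF finite_imageI[OF finite_Zp]])
        then show False using lt ci by simp
      qed
      then obtain y where y: "y \<in> Zp b p" "y \<notin> f ` Zp a p" by blast
      have inj: "inj_on (f(p := y)) (insert p (Zp a p))" using inj_upd_insert[OF pa f(1) y(2)] .
      have yp: "y \<le> p" using y(1) unfolding Zp_def by simp
      have "(f(p:=y)) i \<in> Zp b (Suc p) \<and> (f(p:=y)) i \<le> i" if "i \<in> insert p (Zp a p)" for i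
      proof (cases "i = p")
        case True then show ?thesis using y(1) yp ZB by simp
      next
        case False
        then have "i \<in> Zp a p" using that by simp
        then have "f i \<in> Zp b (Suc p) \<and> f i \<le> i" using f(2) sub by blast
        then show ?thesis using False by simp
      qed
      then show ?thesis using inj ZA by metis
    qed
  qed
qed

lemma dom_M: assumes "a \<in> bin n" "b \<in> bin n" "dominates a b"
  shows "\<exists>f. inj_on f (Zs a) \<and> (\<forall>i\<in>Zs a. f i \<in> Zs b \<and> f i \<le> i)"
  using dom_M_aux[OF assms order_refl] Zp_n[OF assms(1)] Zp_n[OF assms(2)] by simp

lemma zval_ge1: "1 \<le> zval a b" unfolding zval_def by simp

lemma zval_le: "1 \<le> z \<Longrightarrow> zval a b \<le> z \<longleftrightarrow> (\<forall>(i,j)\<in>set (matching a b). i - j \<le> z)"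
  unfolding zval_def by (auto simp: Max_le_iff)

lemma Zs_bin: "a \<in> bin n \<Longrightarrow> i \<in> Zs a \<Longrightarrow> i < n"
  unfolding Zs_def using bin_len by auto

lemma greedy_f: assumes "a \<in> bin n" "b \<in> bin n" "dominates a b"
  shows "\<exists>f. inj_on f (Zs a) \<and> (\<forall>i\<in>Zs a. f i \<in> Zs b \<and> f i \<le> i \<and> i \<le> f i + zval a b)
           \<and> (\<forall>i\<in>Zs a. \<forall>i'\<in>Zs a. i < i' \<longrightarrow> f i < f i')"
proof -
  obtain f0 where f0: "inj_on f0 (Zs a)" "\<forall>i\<in>Zs a. f0 i \<in> Zs b \<and> f0 i \<le> i"
    using dom_M[OF assms] by blast
  define I where "I = zeros_desc a"
  define W where "W = zeros_desc b"
  define G where "G = greedy_match I W"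
  have GG: "G = matching a b" unfolding G_def I_def W_def matching_def ..
  have sI: "set I = Zs a" and sW: "set W = Zs b" unfolding I_def W_def by (rule set_zeros_desc)+
  have dW: "distinct W" unfolding W_def by (rule distinct_zeros_desc)
  have srI: "sorted_wrt (>) I" unfolding I_def by (rule sorted_zeros_desc)
  have "\<forall>i\<in>set I. f0 i \<in> set W \<and> f0 i \<le> i \<and> i \<le> f0 i + n"
    using f0(2) sI sW Zs_bin[OF assms(1)] by fastforce
  from g_opt[OF dW srI f0(1)[folded sI] this]
  have len: "length G = length I" unfolding G_def by blast
  have fst: "map fst G = I" using g_fst len unfolding G_def by blast
  have dI: "distinct I" unfolding I_def by (rule distinct_zeros_desc)  
  then have dfst: "distinct (map fst G)" using fst by simp
  have dsnd: "distinct (map snd G)" unfolding G_def using dW by (rule g_dist)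
  have mono: "\<forall>(i,j)\<in>set G. \<forall>(i',j')\<in>set G. i < i' \<longrightarrow> j < j'" unfolding G_def using dW srI by (rule g_mono)
  have dist: "\<forall>(i,j)\<in>set G. i - j \<le> zval a b" using zval_le[OF zval_ge1[of a b], of a b] GG by simp
  define f where "f i = the (map_of G i)" for i
  have pair: "(i, f i) \<in> set G" if "i \<in> Zs a" for i
  proof -
    have "i \<in> set (map fst G)" using that fst sI by simp
    then obtain j where ij: "(i,j) \<in> set G" by auto
    then have "map_of G i = Some j" using dfst by (rule map_of_is_SomeI[rotated])
    then show ?thesis using ij unfolding f_def by simp
  qed
  have props: "f i \<in> Zs b \<and> f i \<le> i \<and> i \<le> f i + zval a b" if "i \<in> Zs a" for i
  proof -
    have p: "(i, f i) \<in> set G" using pair that .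
    then have "f i \<in> Zs b" "f i \<le> i" using g_sound[of i "f i" I W] sW unfolding G_def by auto
    moreover have "i - f i \<le> zval a b" using dist p by blast
    ultimately show ?thesis by simp
  qed
  have inj: "inj_on f (Zs a)"
  proof (rule inj_onI)
    fix x y assume xy: "x \<in> Zs a" "y \<in> Zs a" "f x = f y"
    have "inj_on snd (set G)" using dsnd by (simp add: distinct_map)
    then have "(x, f x) = (y, f y)" using pair[OF xy(1)] pair[OF xy(2)] xy(3) by (metis inj_onD snd_conv)
    then show "x = y" by simp
  qed
  have mon: "\<forall>i\<in>Zs a. \<forall>i'\<in>Zs a. i < i' \<longrightarrow> f i < f i'"
  proof (intro ballI impI)
    fix i i' assume "i \<in> Zs a" "i' \<in> Zs a" "i < i'"
    then show "f i < f i'" using mono pair[of i] pair[of i'] by fastforce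
  qed
  show ?thesis using inj props mon by blast
qed

lemma key: assumes "a \<in> bin n" "b \<in> bin n" "1 \<le> z"
  shows "(dominates a b \<and> zval a b \<le> z) \<longleftrightarrow> Mz a b z"
proof
  assume h: "dominates a b \<and> zval a b \<le> z"
  then obtain f where "inj_on f (Zs a)" "\<forall>i\<in>Zs a. f i \<in> Zs b \<and> f i \<le> i \<and> i \<le> f i + zval a b"
    using greedy_f[OF assms(1,2)] by blast
  then show "Mz a b z" unfolding Mz_def using h by (meson add_le_mono le_refl order_trans)
next
  assume M: "Mz a b z"
  then obtain f where f: "inj_on f (Zs a)" "\<forall>i\<in>Zs a. f i \<in> Zs b \<and> f i \<le> i \<and> i \<le> f i + z"
    unfolding Mz_def by blast
  define I where "I = zeros_desc a"
  define W where "W = zeros_desc b"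
  have sI: "set I = Zs a" and sW: "set W = Zs b" unfolding I_def W_def by (rule set_zeros_desc)+
  have dW: "distinct W" unfolding W_def by (rule distinct_zeros_desc)
  have srI: "sorted_wrt (>) I" unfolding I_def by (rule sorted_zeros_desc)
  have "\<forall>i\<in>set I. f i \<in> set W \<and> f i \<le> i \<and> i \<le> f i + z" using f(2) sI sW by simp
  from g_opt[OF dW srI f(1)[folded sI] this]
  have "\<forall>(i,j)\<in>set (matching a b). i \<le> j + z" unfolding matching_def I_def W_def by blast
  then have "\<forall>(i,j)\<in>set (matching a b). i - j \<le> z" by auto
  then have "zval a b \<le> z" using zval_le[OF assms(3)] by blast
  then show "dominates a b \<and> zval a b \<le> z" using M_dom[OF assms(1,2) M] by simp
qed

lemma Mz_mono: "Mz a b z \<Longrightarrow> z \<le> z' \<Longrightarrow> Mz a b z'"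
  unfolding Mz_def by (meson add_le_mono le_refl order_trans)

lemma compose: assumes "Mz a c z1" "Mz c b z2" shows "Mz a b (z1 + z2)"
proof -
  obtain f where f: "inj_on f (Zs a)" "\<forall>i\<in>Zs a. f i \<in> Zs c \<and> f i \<le> i \<and> i \<le> f i + z1"
    using assms(1) unfolding Mz_def by blast
  obtain g where g: "inj_on g (Zs c)" "\<forall>i\<in>Zs c. g i \<in> Zs b \<and> g i \<le> i \<and> i \<le> g i + z2"
    using assms(2) unfolding Mz_def by blast
  have sub: "f ` Zs a \<subseteq> Zs c" using f(2) by blast
  have inj: "inj_on (g \<circ> f) (Zs a)" using f(1) inj_on_subset[OF g(1) sub] by (rule comp_inj_on)
  have "\<forall>i\<in>Zs a. (g \<circ> f) i \<in> Zs b \<and> (g \<circ> f) i \<le> i \<and> i \<le> (g \<circ> f) i + (z1 + z2)"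
  proof
    fix i assume i: "i \<in> Zs a"
    then have "f i \<in> Zs c" "f i \<le> i" "i \<le> f i + z1" using f(2) by auto
    moreover have "g (f i) \<in> Zs b" "g (f i) \<le> f i" "f i \<le> g (f i) + z2" using g(2) \<open>f i \<in> Zs c\<close> by auto
    ultimately show "(g \<circ> f) i \<in> Zs b \<and> (g \<circ> f) i \<le> i \<and> i \<le> (g \<circ> f) i + (z1 + z2)" by simp
  qed
  then show ?thesis unfolding Mz_def using inj by blast
qed

lemma decomp: assumes "a \<in> bin n" "b \<in> bin n" "Mz a b (Suc m)"
  shows "\<exists>c\<in>bin n. Mz a c m \<and> Mz c b 1"
proof -
  have dom: "dominates a b" using M_dom[OF assms(1,2,3)] .
  have zv: "zval a b \<le> Suc m" using key[OF assms(1,2), of "Suc m"] assms(3) by simp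
  obtain f where f: "inj_on f (Zs a)" "\<forall>i\<in>Zs a. f i \<in> Zs b \<and> f i \<le> i \<and> i \<le> f i + zval a b"
    and mon: "\<forall>i\<in>Zs a. \<forall>i'\<in>Zs a. i < i' \<longrightarrow> f i < f i'"
    using greedy_f[OF assms(1,2) dom] by blast
  have fp: "f i \<in> Zs b" "f i \<le> i" "i \<le> f i + Suc m" if "i \<in> Zs a" for i
    using f(2) that zv by auto
  define h where "h i = max (f i) (i - m)" for i
  have hle: "h i \<le> i" if "i \<in> Zs a" for i using fp[OF that] unfolding h_def by simp
  have hn: "h i < n" if "i \<in> Zs a" for i using hle[OF that] Zs_bin[OF assms(1) that] by simp
  have hmon: "h i < h i'" if "i \<in> Zs a" "i' \<in> Zs a" "i < i'" for i i'
  proof -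
    have "f i < f i'" using mon that by blast
    moreover have "i - m \<le> h i'" unfolding h_def using that(3) by simp
    moreover have "f i \<le> h i'" unfolding h_def using \<open>f i < f i'\<close> by simp
    moreover have "h i \<le> i" using hle that(1) by simp
    ultimately show ?thesis unfolding h_def using that(3) by (simp add: max_def split: if_splits)
  qed
  have hinj: "inj_on h (Zs a)"
  proof (rule inj_onI)
    fix x y assume xy: "x \<in> Zs a" "y \<in> Zs a" "h x = h y"
    show "x = y"
    proof (rule ccontr)
      assume "x \<noteq> y"
      then have "x < y \<or> y < x" by arith
      then show False using hmon xy by (metis less_irrefl)
    qed
  qed
  define c where "c = map (\<lambda>k. if k \<in> h ` Zs a then 0 else (1::nat)) [0..<n]"
  have lc: "length c = n" unfolding c_def by simp
  have cbin: "c \<in> bin n" unfolding bin_def c_def by auto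
  have Zc: "Zs c = h ` Zs a"
  proof
    show "Zs c \<subseteq> h ` Zs a" unfolding Zs_def c_def by (auto split: if_splits)
    show "h ` Zs a \<subseteq> Zs c"
    proof
      fix k assume "k \<in> h ` Zs a"
      then obtain i where i: "i \<in> Zs a" "k = h i" by blast
      then have "k < n" using hn by simp
      moreover have "h i \<in> h ` Zs a" using i(1) by (rule imageI)
      ultimately show "k \<in> Zs c" unfolding Zs_def c_def using i(2) by simp
    qed
  qed
  have M1: "Mz a c m" unfolding Mz_def
  proof (intro exI conjI)
    show "inj_on h (Zs a)" by (rule hinj)
    show "\<forall>i\<in>Zs a. h i \<in> Zs c \<and> h i \<le> i \<and> i \<le> h i + m"
    proof
      fix i assume i: "i \<in> Zs a"
      have "i - m \<le> h i" unfolding h_def by simp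
      then have "i \<le> h i + m" by simp
      then show "h i \<in> Zs c \<and> h i \<le> i \<and> i \<le> h i + m" using Zc i hle[OF i] by blast
    qed
  qed
  define g where "g = f \<circ> inv_into (Zs a) h"
  have gh: "g (h i) = f i" if "i \<in> Zs a" for i
    unfolding g_def using inv_into_f_f[OF hinj that] by simp
  have M2: "Mz c b 1" unfolding Mz_def
  proof (intro exI conjI)
    show "inj_on g (Zs c)"
    proof (rule inj_onI)
      fix x y assume xy: "x \<in> Zs c" "y \<in> Zs c" "g x = g y"
      obtain i where i: "i \<in> Zs a" "x = h i" using xy(1) Zc by blast
      obtain i' where i': "i' \<in> Zs a" "y = h i'" using xy(2) Zc by blast
      have "f i = f i'" using xy(3) gh i i' by simp
      then have "i = i'" using f(1) i i' by (meson inj_onD)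
      then show "x = y" using i i' by simp
    qed
    show "\<forall>k\<in>Zs c. g k \<in> Zs b \<and> g k \<le> k \<and> k \<le> g k + 1"
    proof
      fix k assume "k \<in> Zs c"
      then obtain i where i: "i \<in> Zs a" "k = h i" using Zc by blast
      have "f i \<le> h i" unfolding h_def by simp
      moreover have "h i \<le> f i + 1" unfolding h_def using fp(3)[OF i(1)] by simp
      ultimately show "g k \<in> Zs b \<and> g k \<le> k \<and> k \<le> g k + 1" using gh[OF i(1)] i fp(1)[OF i(1)] by simp
    qed
  qed
  show ?thesis using cbin M1 M2 by blast
qed

lemma finite_bin: "finite (bin n)"
proof -
  have "bin n = {xs. set xs \<subseteq> {0,1} \<and> length xs = n}" unfolding bin_def by auto
  then show ?thesis using finite_lists_length_eq[of "{0::nat,1}" n] by simp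
qed

lemma Apow_Suc_pos: "0 < Apow n (Suc m) a b \<longleftrightarrow> (\<exists>w\<in>bin n. 0 < Apow n m a w \<and> 0 < A_entry w b)"
proof -
  have "0 < Apow n (Suc m) a b \<longleftrightarrow> (\<Sum>w\<in>bin n. Apow n m a w * A_entry w b) \<noteq> 0" by simp
  also have "\<dots> \<longleftrightarrow> (\<exists>w\<in>bin n. Apow n m a w * A_entry w b \<noteq> 0)"
    using sum_eq_0_iff[OF finite_bin[of n], of "\<lambda>w. Apow n m a w * A_entry w b"] by auto
  finally show ?thesis by simp
qed

lemma chi_bin: "a \<in> bin n \<Longrightarrow> chi a = a"
  unfolding chi_def bin_def by (rule map_idI) auto

lemma zdom_iff: "a \<in> bin n \<Longrightarrow> b \<in> bin n \<Longrightarrow> zdom z a b \<longleftrightarrow> dominates a b \<and> z = zval a b"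
  unfolding zdom_def using chi_bin by simp

lemma A_pos: assumes "a \<in> bin n" "b \<in> bin n" shows "0 < A_entry a b \<longleftrightarrow> Mz a b 1"
proof -
  have "0 < A_entry a b \<longleftrightarrow> dominates a b \<and> 1 = zval a b"
    unfolding A_entry_def using zdom_iff[OF assms] by simp
  also have "\<dots> \<longleftrightarrow> dominates a b \<and> zval a b \<le> 1" using zval_ge1[of a b] by auto
  also have "\<dots> \<longleftrightarrow> Mz a b 1" using key[OF assms] by simp
  finally show ?thesis .
qed

lemma Apow_char: "1 \<le> m \<Longrightarrow> a \<in> bin n \<Longrightarrow> b \<in> bin n \<Longrightarrow> 0 < Apow n m a b \<longleftrightarrow> Mz a b m"
proof (induction m arbitrary: b)
  case 0 then show ?case by simp
next
  case (Suc m)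
  show ?case
  proof (cases "m = 0")
    case True
    have "0 < Apow n (Suc m) a b \<longleftrightarrow> 0 < A_entry a b"
      unfolding Apow_Suc_pos using True Suc.prems by auto
    then show ?thesis using A_pos[OF Suc.prems(2,3)] True by simp
  next
    case False
    then have m1: "1 \<le> m" by simp
    have "0 < Apow n (Suc m) a b \<longleftrightarrow> (\<exists>w\<in>bin n. Mz a w m \<and> Mz w b 1)"
      unfolding Apow_Suc_pos using Suc.IH[OF m1 Suc.prems(2)] A_pos[OF _ Suc.prems(3)] by blast
    also have "\<dots> \<longleftrightarrow> Mz a b (Suc m)"
      using decomp[OF Suc.prems(2,3)] compose[of a _ m b 1] by auto
    finally show ?thesis .
  qed
qed

theorem lemma5p24:
  fixes n m :: nat and a b :: "nat list"
  assumes "n > 0" and "m > 0" and "a \<in> bin n" and "b \<in> bin n"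
  shows "(Apow n m a b > 0 \<longrightarrow> Apow n (Suc m) a b > 0) \<and>
         (Apow n m a b > 0 \<longleftrightarrow> (\<exists>z\<le>m. zdom z a b))"
proof -
  have m1: "1 \<le> m" using assms(2) by simp
  have c1: "Apow n m a b > 0 \<longleftrightarrow> Mz a b m" using Apow_char[OF m1 assms(3,4)] .
  have c2: "Apow n (Suc m) a b > 0 \<longleftrightarrow> Mz a b (Suc m)" using Apow_char[of "Suc m", OF _ assms(3,4)] by simp
  have p1: "Apow n m a b > 0 \<longrightarrow> Apow n (Suc m) a b > 0" using c1 c2 Mz_mono[of a b m "Suc m"] by simp
  have "(\<exists>z\<le>m. zdom z a b) \<longleftrightarrow> dominates a b \<and> zval a b \<le> m"
    using zdom_iff[OF assms(3,4)] by auto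
  also have "\<dots> \<longleftrightarrow> Mz a b m" using key[OF assms(3,4) m1] .
  finally show ?thesis using p1 c1 by simp
qed

end
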